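(* Let $c,h,\alpha,\beta\in\mathbb{C}$ and $l,\gamma\in\mathbb{C}^*$. (a) For every $k\in\frac12\mathbb{Z}$, $\mathbf{1}\otimes v_k\notin U(\mathcal{D})(\mathbf{1}\otimes v_{k+\frac12})$ in $M(c,h,l)\otimes A(\alpha,\beta,\gamma)$. (b) The $\mathcal{D}$-module $M(c,h,l)\otimes A(\alpha,\beta,\gamma)$ is not irreducible.
   Context: The mirror-twisted Heisenberg–Virasoro algebra $\mathcal{D}$ is the complex Lie algebra with basis $\{d_m,h_r,\mathbf{c},\mathbf{l}: m\in\mathbb{Z}, r\in\frac12+\mathbb{Z}\}$ and brackets $[d_m,d_n]=(m-n)d_{m+n}+\frac{m^3-m}{12}\delta_{m+n,0}\mathbf{c}$, $[d_m,h_r]=-rh_{m+r}$, $[h_r,h_s]=r\delta_{r+s,0}\mathbf{l}$, with $\mathbf{c},\mathbf{l}$ central. $\mathcal{D}^{+}=\mathrm{span}\{d_{n},h_{r}: n\in\mathbb{N}, r\in\frac12+\mathbb{Z}_{\ge0}\}$, $\mathcal{D}^0=\mathrm{span}\{d_0,\mathbf{c},\mathbf{l}\}$. The Verma module is $M(c,h,l)=U(\mathcal{D})\otimes_{U(\mathcal{D}^0\oplus\mathcal{D}^+)}\mathbb{C}\mathbf{1}$ with $d_0\mathbf{1}=h\mathbf{1}$, $\mathbf{c}\mathbf{1}=c\mathbf{1}$, $\mathbf{l}\mathbf{1}=l\mathbf{1}$, $\mathcal{D}^+\mathbf{1}=0$. $A(\alpha,\beta,\gamma)$ is the $\mathcal{D}$-module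 with basis $\{v_k:k\in\frac12\mathbb{Z}\}$ and $d_mv_k=(\alpha+\beta m-k)v_{m+k}$, $h_rv_n=v_{n+r}$ for $n\in\mathbb{Z}$, $h_rv_s=\gamma v_{r+s}$ for $s\in\frac12+\mathbb{Z}$, $\mathbf{c},\mathbf{l}$ acting as $0$. Tensor products carry the action $x(v\otimes w)=xv\otimes w+v\otimes xw$. *)

theory Defs
  imports Complex_Main "HOL-Library.Function_Algebras"
begin

text \<open>Basis of D.  Dd m = d_m (m in Z); Hh n = h_(n+1/2) (so every r in 1/2+Z is
  encoded by the unique integer n with r = n + 1/2); Cc = central c; Ll = central l.\<close>
datatype Dgen = Dd int | Hh int | Cc | Ll

definition hr :: "int \<Rightarrow> complex" where
  "hr n = of_int n + 1/2"

text \<open>Structure constants: brk x y z = coefficient of basis vector z in [x,y].\<close>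
fun brk :: "Dgen \<Rightarrow> Dgen \<Rightarrow> Dgen \<Rightarrow> complex" where
  "brk (Dd m) (Dd n) z =
     (if z = Dd (m + n) then of_int (m - n) else 0)
   + (if z = Cc \<and> m + n = 0 then (of_int m ^ 3 - of_int m) / 12 else 0)"
| "brk (Dd m) (Hh n) z = (if z = Hh (m + n) then - hr n else 0)"
| "brk (Hh n) (Dd m) z = (if z = Hh (m + n) then hr n else 0)"
| "brk (Hh n) (Hh n') z = (if z = Ll \<and> n + n' + 1 = 0 then hr n else 0)"
| "brk _ _ z = 0"

definition cscale :: "complex \<Rightarrow> ('a \<Rightarrow> complex) \<Rightarrow> ('a \<Rightarrow> complex)" where
  "cscale a f = (\<lambda>z. a * f z)"

abbreviation cspan :: "('a \<Rightarrow> complex) set \<Rightarrow> ('a \<Rightarrow> complex) set" where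
  "cspan \<equiv> module.span cscale"

abbreviation csubspace :: "('a \<Rightarrow> complex) set \<Rightarrow> bool" where
  "csubspace \<equiv> module.subspace cscale"

definition finsupp :: "('a \<Rightarrow> complex) set" where
  "finsupp = {f. finite {z. f z \<noteq> 0}}"

definition ind :: "'a \<Rightarrow> 'a \<Rightarrow> complex" where
  "ind a = (\<lambda>z. if z = a then 1 else 0)"

text \<open>Elements of T(D) are finitely supported functions Dgen list \<Rightarrow> complex
  (word w stands for the product of its letters).  sandwich a f b = a * f * b for words a b.\<close>
definition sandwich :: "Dgen list \<Rightarrow> (Dgen list \<Rightarrow> complex) \<Rightarrow> Dgen list \<Rightarrow> (Dgen list \<Rightarrow> complex)" where
  "sandwich a f b = (\<lambda>w. if length a + length b \<le> length w \<and> take (length a) w = a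
        \<and> drop (length w - length b) w = b
      then f (drop (length a) (take (length w - length b) w)) else 0)"

text \<open>x y - y x - [x,y], generating the ideal defining U(D).\<close>
definition lie_rel :: "Dgen \<Rightarrow> Dgen \<Rightarrow> (Dgen list \<Rightarrow> complex)" where
  "lie_rel x y = ind [x, y] - ind [y, x]
      - (\<lambda>w. case w of [z] \<Rightarrow> brk x y z | _ \<Rightarrow> 0)"

text \<open>Basis of D^0 + D^+ and the character by which it acts on the highest weight vector 1.\<close>
fun in_borel :: "Dgen \<Rightarrow> bool" where
  "in_borel (Dd m) = (m \<ge> 0)"
| "in_borel (Hh n) = (n \<ge> 0)"
| "in_borel Cc = True"
| "in_borel Ll = True"

fun borel_chi :: "complex \<Rightarrow> complex \<Rightarrow> complex \<Rightarrow> Dgen \<Rightarrow> complex" where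
  "borel_chi c h l (Dd m) = (if m = 0 then h else 0)"
| "borel_chi c h l (Hh n) = 0"
| "borel_chi c h l Cc = c"
| "borel_chi c h l Ll = l"

text \<open>Generators of the kernel K of T(D) \<rightarrow> M(c,h,l) = U(D) \<otimes>_{U(D^0+D^+)} C 1:
  the two-sided ideal of the Lie relations plus the left ideal generated by b - chi(b).\<close>
definition verma_kgen :: "complex \<Rightarrow> complex \<Rightarrow> complex \<Rightarrow> (Dgen list \<Rightarrow> complex) set" where
  "verma_kgen c h l =
     {sandwich a (lie_rel x y) b | a x y b. True}
   \<union> {sandwich a (ind [x] - cscale (borel_chi c h l x) (ind [])) [] | a x. in_borel x}"

text \<open>Basis vector v_k of A, k in 1/2 Z, is encoded by the integer j = 2k.
  The space T(D) \<otimes> A is realised as finitely supported functions on (word, j);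
  M \<otimes> A = (T(D) \<otimes> A) / (K \<otimes> A).\<close>

fun shA :: "Dgen \<Rightarrow> int" where
  "shA (Dd m) = 2 * m"
| "shA (Hh n) = 2 * n + 1"
| "shA Cc = 0"
| "shA Ll = 0"

text \<open>x v_(j/2) = coefA x j * v_((j + shA x)/2).\<close>
fun coefA :: "complex \<Rightarrow> complex \<Rightarrow> complex \<Rightarrow> Dgen \<Rightarrow> int \<Rightarrow> complex" where
  "coefA \<alpha> \<beta> \<gamma> (Dd m) j = \<alpha> + \<beta> * of_int m - of_int j / 2"
| "coefA \<alpha> \<beta> \<gamma> (Hh n) j = (if even j then 1 else \<gamma>)"
| "coefA \<alpha> \<beta> \<gamma> Cc j = 0"
| "coefA \<alpha> \<beta> \<gamma> Ll j = 0"

text \<open>Action of a basis element x on T(D) \<otimes> A: x(u \<otimes> v) = (x u) \<otimes> v + u \<otimes> (x v).\<close>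
definition actMA :: "complex \<Rightarrow> complex \<Rightarrow> complex \<Rightarrow> Dgen
    \<Rightarrow> (Dgen list \<times> int \<Rightarrow> complex) \<Rightarrow> (Dgen list \<times> int \<Rightarrow> complex)" where
  "actMA \<alpha> \<beta> \<gamma> x f = (\<lambda>(w, j).
      (case w of [] \<Rightarrow> 0 | y # w' \<Rightarrow> if y = x then f (w', j) else 0)
    + coefA \<alpha> \<beta> \<gamma> x (j - shA x) * f (w, j - shA x))"

definition KA :: "complex \<Rightarrow> complex \<Rightarrow> complex \<Rightarrow> (Dgen list \<times> int \<Rightarrow> complex) set" where
  "KA c h l = cspan {(\<lambda>(w, j). if j = j0 then g w else 0) | g j0. g \<in> verma_kgen c h l}"

definition one_v :: "int \<Rightarrow> (Dgen list \<times> int \<Rightarrow> complex)" where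
  "one_v j = ind ([], j)"

fun actw :: "(Dgen \<Rightarrow> 'v \<Rightarrow> 'v) \<Rightarrow> Dgen list \<Rightarrow> 'v \<Rightarrow> 'v" where
  "actw act [] u = u"
| "actw act (x # xs) u = act x (actw act xs u)"

text \<open>Preimage in T(D) \<otimes> A of the cyclic submodule U(D) [u] of (T(D) \<otimes> A)/K:
  spanned by K and all x1 ... xn u.\<close>
definition cyc :: "('v \<Rightarrow> complex) set \<Rightarrow> (Dgen \<Rightarrow> ('v \<Rightarrow> complex) \<Rightarrow> ('v \<Rightarrow> complex))
     \<Rightarrow> ('v \<Rightarrow> complex) \<Rightarrow> ('v \<Rightarrow> complex) set" where
  "cyc K act u = cspan (K \<union> {actw act xs u | xs. True})"

text \<open>Irreducibility of the D-module V/K (V = finitely supported functions):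
  V/K is nonzero and its only submodules are 0 and V/K.  Submodules of V/K correspond
  to subspaces S with K \<subseteq> S \<subseteq> V stable under the action of the basis of D.\<close>
definition quot_irreducible :: "('v \<Rightarrow> complex) set \<Rightarrow> (Dgen \<Rightarrow> ('v \<Rightarrow> complex) \<Rightarrow> ('v \<Rightarrow> complex)) \<Rightarrow> bool" where
  "quot_irreducible K act \<longleftrightarrow> K \<noteq> finsupp \<and>
     (\<forall>S. csubspace S \<and> K \<subseteq> S \<and> S \<subseteq> finsupp \<and> (\<forall>x. \<forall>f\<in>S. act x f \<in> S)
        \<longrightarrow> S = K \<or> S = finsupp)"

end

theory Submission
  imports Defs
begin


fun bz :: "Dgen \<Rightarrow> Dgen \<Rightarrow> Dgen list" where
  "bz (Dd m) (Dd n) = [Dd (m+n), Cc]"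
| "bz (Dd m) (Hh n) = [Hh (m+n)]"
| "bz (Hh n) (Dd m) = [Hh (m+n)]"
| "bz (Hh n) (Hh n') = [Ll]"
| "bz _ _ = []"

definition bs :: "Dgen \<Rightarrow> Dgen \<Rightarrow> (Dgen \<Rightarrow> complex) \<Rightarrow> complex" where
  "bs x y g = (\<Sum>z\<in>set (bz x y). brk x y z * g z)"

lemma i3d: "(a::int) + (b + (c + 1)) = 0 \<Longrightarrow> c = - a - b - 1" by auto
lemma i1d: "(a::int) + b = 0 \<Longrightarrow> b = - a" by auto
lemma i2d: "(a::int) + (b + 1) = 0 \<Longrightarrow> b = - a - 1" by auto
lemma i0d: "0 \<le> (a::int) \<Longrightarrow> 0 \<le> b \<Longrightarrow> (a + b = 0) = (a = 0 \<and> b = 0)" by auto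
lemma i5d: "(b::int) + 1 = - a \<Longrightarrow> b = - a - 1" by auto
lemma i6d: "(a::int) + b + 1 = 0 \<Longrightarrow> b = - a - 1" by auto
lemma i4d: "(a::int) + (b + c) = 0 \<Longrightarrow> c = - a - b" by auto

lemma jacobi: "bs y w (\<lambda>z. bs x z g) - bs x w (\<lambda>z. bs y z g) = bs x y (\<lambda>z. bs z w g)"
  apply (cases x; cases y; cases w; (simp add: bs_def hr_def ac_simps del: mult_eq_0_iff)?; (intro conjI impI)?;
      (drule i3d | drule i4d)?; clarify?; (simp add: field_simps power3_eq_cube)?)
  done
lemma brk_nz: "brk x y z \<noteq> 0 \<Longrightarrow> z \<in> set (bz x y)"
  by (cases x; cases y) (auto split: if_splits)

lemma bz_sym: "set (bz x y) = set (bz y x)"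
  by (cases x; cases y) (auto simp: add.commute)

lemma brk_anti: "brk y x z = - brk x y z"
  by (cases x; cases y; auto simp: hr_def; (drule i2d | drule i5d | drule i6d | drule i1d)?; clarify?; simp add: field_simps power3_eq_cube)

lemma bs_anti: "bs y x g = - bs x y g"
  unfolding bs_def by (subst bz_sym) (simp only: brk_anti[where x=x and y=y] mult_minus_left sum_negf)

lemma bs_cong: "(\<And>z. brk x y z \<noteq> 0 \<Longrightarrow> g z = g' z) \<Longrightarrow> bs x y g = bs x y g'"
  unfolding bs_def by (rule sum.cong) auto

lemma bs_add: "bs x y (\<lambda>z. f z + g z) = bs x y f + bs x y g"
  unfolding bs_def by (simp add: distrib_left sum.distrib)

lemma bs_diff: "bs x y (\<lambda>z. f z - g z) = bs x y f - bs x y g"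
  unfolding bs_def by (simp add: right_diff_distrib sum_subtractf)

lemma bs_cmult: "bs x y (\<lambda>z. c * f z) = c * bs x y f"
  unfolding bs_def by (simp add: sum_distrib_left ac_simps)

lemma bs_sum: "bs x y (\<lambda>z. \<Sum>i\<in>I. f i z) = (\<Sum>i\<in>I. bs x y (f i))"
  unfolding bs_def sum_distrib_left by (rule sum.swap)

lemma bs_swap: "bs x y (\<lambda>z. bs u t (\<lambda>s. F z s)) = bs u t (\<lambda>s. bs x y (\<lambda>z. F z s))"
  unfolding bs_def sum_distrib_left
  by (subst sum.swap) (rule sum.cong[OF refl], rule sum.cong[OF refl], simp add: ac_simps)

lemma bs_zero: "bs x y (\<lambda>z. 0) = 0"
  unfolding bs_def by simp

lemma sh_brk: "brk x y z \<noteq> 0 \<Longrightarrow> shA z = shA x + shA y"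
  by (cases x; cases y) (auto split: if_splits)

lemma B_closed: "in_borel x \<Longrightarrow> in_borel y \<Longrightarrow> brk x y z \<noteq> 0 \<Longrightarrow> in_borel z"
  by (cases x; cases y) (auto split: if_splits)

lemma N_closed: "\<not> in_borel x \<Longrightarrow> \<not> in_borel y \<Longrightarrow> brk x y z \<noteq> 0 \<Longrightarrow> \<not> in_borel z"
  by (cases x; cases y) (auto split: if_splits)

lemma chi_char: "in_borel x \<Longrightarrow> in_borel y \<Longrightarrow> bs x y (borel_chi c h l) = 0"
  by (cases x; cases y) (auto simp: bs_def i0d)

lemma shB: "in_borel y \<Longrightarrow> shA y \<ge> 0"
  by (cases y) auto

lemma Arel: "coefA a b g y j * coefA a b g x (j + shA y) - coefA a b g x j * coefA a b g y (j + shA x)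
   = bs x y (\<lambda>z. coefA a b g z j)"
  by (cases x; cases y) (auto simp: bs_def hr_def field_simps)

fun rsplit :: "Dgen list \<Rightarrow> (Dgen list \<times> Dgen \<times> Dgen list) option" where
  "rsplit [] = None"
| "rsplit (x # w) = (case rsplit w of Some (a, y, b) \<Rightarrow> Some (x # a, y, b)
      | None \<Rightarrow> (if in_borel x then Some ([], x, w) else None))"

lemma rsplit_None: "rsplit w = None \<longleftrightarrow> (\<forall>t\<in>set w. \<not> in_borel t)"
  by (induction w) (auto split: option.splits)

lemma rsplit_Some: "rsplit w = Some (a, x, b) \<Longrightarrow> w = a @ x # b \<and> in_borel x \<and> (\<forall>t\<in>set b. \<not> in_borel t)"
proof (induction w arbitrary: a x b)
  case Nil then show ?case by simp
next
  case (Cons t w)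
  show ?case
  proof (cases "rsplit w")
    case None
    with Cons.prems show ?thesis by (auto simp: rsplit_None split: if_splits)
  next
    case (Some p)
    then obtain a' x' b' where p: "rsplit w = Some (a', x', b')" by (cases p) auto
    with Cons.prems have "a = t # a'" "x = x'" "b = b'" by auto
    with Cons.IH[OF p] show ?thesis by auto
  qed
qed

lemma rsplit_app: "in_borel x \<Longrightarrow> \<forall>t\<in>set b. \<not> in_borel t \<Longrightarrow> rsplit (a @ x # b) = Some (a, x, b)"
proof (induction a)
  case Nil
  then have "rsplit b = None" by (simp add: rsplit_None)
  with Nil show ?case by simp
next
  case (Cons t a)
  then show ?case by simp
qed

context
  fixes cc hh ll al be ga :: complex and jt :: int
begin

fun phi :: "int \<Rightarrow> Dgen list \<Rightarrow> complex" where
  "phi j [] = (if j = jt then 1 else 0)"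
| "phi j (y # w) = - coefA al be ga y j * phi (j + shA y) w"

function lam :: "int \<Rightarrow> Dgen list \<Rightarrow> complex" where
  "lam j w = (case rsplit w of None \<Rightarrow> phi j w
     | Some (a, x, b) \<Rightarrow> borel_chi cc hh ll x * lam j (a @ b)
          + (\<Sum>i<length b. bs x (b ! i) (\<lambda>z. lam j (a @ b[i := z]))))"
  by pat_completeness auto
termination
  by (relation "measure (\<lambda>(j, w). length w)") (auto dest!: rsplit_Some)

declare lam.simps[simp del]

definition Dsum :: "int \<Rightarrow> Dgen \<Rightarrow> Dgen list \<Rightarrow> Dgen list \<Rightarrow> Dgen list \<Rightarrow> complex" where
  "Dsum j u a c s = (\<Sum>i<length c. bs u (c ! i) (\<lambda>z. lam j (a @ c[i := z] @ s)))"

lemma lam_N: "\<forall>t\<in>set w. \<not> in_borel t \<Longrightarrow> lam j w = phi j w"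
  by (subst lam.simps) (simp add: rsplit_None[symmetric])

lemma lam_B: "in_borel x \<Longrightarrow> \<forall>t\<in>set b. \<not> in_borel t \<Longrightarrow>
   lam j (a @ x # b) = borel_chi cc hh ll x * lam j (a @ b) + Dsum j x a b []"
  by (subst lam.simps) (simp add: rsplit_app Dsum_def)

lemma Dsum_nil[simp]: "Dsum j u a [] s = 0"
  by (simp add: Dsum_def)

lemma Dsum_cons: "Dsum j u a (t # c) s = bs u t (\<lambda>z. lam j (a @ z # c @ s)) + Dsum j u (a @ [t]) c s"
  unfolding Dsum_def by (simp only: length_Cons sum.lessThan_Suc_shift) simp

lemma Dsum_append: "Dsum j u p (c1 @ c2) s = Dsum j u p c1 (c2 @ s) + Dsum j u (p @ c1) c2 s"
  by (induction c1 arbitrary: p) (simp_all add: Dsum_cons)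

lemma phi_rel: "phi j (a @ x # y # b) - phi j (a @ y # x # b) = bs x y (\<lambda>z. phi j (a @ z # b))"
proof (induction a arbitrary: j)
  case Nil
  have "bs x y (\<lambda>z. phi j (z # b)) = bs x y (\<lambda>z. - coefA al be ga z j * phi (j + shA x + shA y) b)"
    by (rule bs_cong) (simp add: sh_brk add.assoc)
  also have "\<dots> = bs x y (\<lambda>z. (- phi (j + shA x + shA y) b) * coefA al be ga z j)"
    by (simp add: ac_simps)
  also have "\<dots> = - phi (j + shA x + shA y) b * bs x y (\<lambda>z. coefA al be ga z j)"
    by (simp only: bs_cmult)
  also have "\<dots> = phi j (x # y # b) - phi j (y # x # b)"
    by (simp add: Arel[symmetric] algebra_simps)
  finally show ?case by simp
next
  case (Cons t a)
  have "phi j ((t#a) @ x#y#b) - phi j ((t#a)@y#x#b) = (- coefA al be ga t j) * (phi (j+shA t) (a@x#y#b) - phi (j+shA t) (a@y#x#b))"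
    by (simp add: algebra_simps)
  also have "\<dots> = (- coefA al be ga t j) * bs x y (\<lambda>z. phi (j+shA t) (a@z#b))" by (simp only: Cons.IH)
  also have "\<dots> = bs x y (\<lambda>z. phi j ((t#a)@z#b))" by (subst bs_cmult[symmetric]) simp
  finally show ?case .
qed

lemma lam_Ncons: "\<not> in_borel y \<Longrightarrow> lam j (y # w) = - coefA al be ga y j * lam (j + shA y) w"
proof (induction "length w" arbitrary: w j rule: less_induct)
  case less
  show ?case
  proof (cases "rsplit w")
    case None
    then have "\<forall>t\<in>set (y # w). \<not> in_borel t" using less.prems by (simp add: rsplit_None)
    then show ?thesis using None by (simp add: lam_N rsplit_None)
  next
    case (Some p)
    then obtain a x b where p: "rsplit w = Some (a, x, b)" by (cases p) auto
    from rsplit_Some[OF p] have w: "w = a @ x # b" and x: "in_borel x" and b: "\<forall>t\<in>set b. \<not> in_borel t" by auto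
    have "lam j (y # w) = lam j ((y # a) @ x # b)" by (simp add: w)
    also have "\<dots> = borel_chi cc hh ll x * lam j (y # (a @ b)) + Dsum j x (y # a) b []"
      using lam_B[OF x b, of j "y # a"] by simp
    also have "lam j (y # (a @ b)) = - coefA al be ga y j * lam (j + shA y) (a @ b)"
      by (rule less.hyps) (auto simp: w less.prems)
    also have "Dsum j x (y # a) b [] = - coefA al be ga y j * Dsum (j + shA y) x a b []"
    proof -
      have "lam j (y # (a @ b[i := z])) = - coefA al be ga y j * lam (j + shA y) (a @ b[i := z])" for i z
        by (rule less.hyps) (auto simp: w less.prems)
      then show ?thesis
        unfolding Dsum_def sum_distrib_left by (simp add: bs_cmult[symmetric])
    qed
    finally show ?thesis by (simp add: w lam_B x b algebra_simps)
  qed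
qed


lemma sum_pick: "i < (n::nat) \<Longrightarrow> (\<Sum>k<n. f k) = f i + (\<Sum>k<n. if k = i then 0 else f k)"
proof -
  assume i: "i < n"
  have "(\<Sum>k<n. f k) = (\<Sum>k<n. (if k = i then f k else 0) + (if k = i then 0 else f k))"
    by (rule sum.cong) auto
  also have "\<dots> = (\<Sum>k<n. if k = i then f k else 0) + (\<Sum>k<n. if k = i then 0 else f k)"
    by (rule sum.distrib)
  also have "(\<Sum>k<n. if k = i then f k else 0) = f i"
    using i by (simp add: sum.delta')
  finally show ?thesis .
qed

lemma bs_if: "bs x y (\<lambda>z. if P then 0 else f z) = (if P then 0 else bs x y f)"
  by (simp add: bs_zero)

lemma DD_lemma:
  fixes F :: "Dgen list \<Rightarrow> complex"
  defines "Dp \<equiv> \<lambda>u c. (\<Sum>k<length c. bs u (c ! k) (\<lambda>t. F (c[k := t])))"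
  shows "(\<Sum>i<length b. bs y (b ! i) (\<lambda>z. Dp x (b[i := z])))
       - (\<Sum>i<length b. bs x (b ! i) (\<lambda>z. Dp y (b[i := z])))
       = (\<Sum>i<length b. bs x y (\<lambda>w. bs w (b ! i) (\<lambda>t. F (b[i := t]))))"
proof -
  define H where "H = (\<lambda>x y i k. bs y (b ! i) (\<lambda>z. bs x (b ! k) (\<lambda>t. F ((b[i := z])[k := t]))))"
  have split: "(\<Sum>i<length b. bs y (b ! i) (\<lambda>z. Dp x (b[i := z])))
     = (\<Sum>i<length b. bs y (b ! i) (\<lambda>z. bs x z (\<lambda>t. F (b[i := t]))))
       + (\<Sum>i<length b. \<Sum>k<length b. if k = i then 0 else H x y i k)" for x y
  proof -
    have "bs y (b ! i) (\<lambda>z. Dp x (b[i := z])) = bs y (b ! i) (\<lambda>z. bs x z (\<lambda>t. F (b[i := t])))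
        + (\<Sum>k<length b. if k = i then 0 else H x y i k)" if i: "i < length b" for i
    proof -
      have "Dp x (b[i := z]) = bs x z (\<lambda>t. F (b[i := t]))
          + (\<Sum>k<length b. if k = i then 0 else bs x (b ! k) (\<lambda>t. F ((b[i := z])[k := t])))" for z
      proof -
        have "Dp x (b[i := z]) = (\<Sum>k<length b. bs x (b[i := z] ! k) (\<lambda>t. F ((b[i := z])[k := t])))"
          by (simp add: Dp_def)
        also have "\<dots> = bs x (b[i := z] ! i) (\<lambda>t. F ((b[i := z])[i := t]))
           + (\<Sum>k<length b. if k = i then 0 else bs x (b[i := z] ! k) (\<lambda>t. F ((b[i := z])[k := t])))"
          by (rule sum_pick[OF i])
        also have "(\<Sum>k<length b. if k = i then 0 else bs x (b[i := z] ! k) (\<lambda>t. F ((b[i := z])[k := t])))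
           = (\<Sum>k<length b. if k = i then 0 else bs x (b ! k) (\<lambda>t. F ((b[i := z])[k := t])))"
          by (rule sum.cong) auto
        finally show ?thesis using i by simp
      qed
      then have "bs y (b ! i) (\<lambda>z. Dp x (b[i := z])) = bs y (b ! i) (\<lambda>z. bs x z (\<lambda>t. F (b[i := t]))
          + (\<Sum>k<length b. if k = i then 0 else bs x (b ! k) (\<lambda>t. F ((b[i := z])[k := t]))))"
        by simp
      also have "\<dots> = bs y (b ! i) (\<lambda>z. bs x z (\<lambda>t. F (b[i := t])))
          + (\<Sum>k<length b. if k = i then 0 else H x y i k)"
        unfolding H_def by (simp add: bs_add bs_sum bs_if)
      finally show ?thesis .
    qed
    then show ?thesis by (simp add: sum.distrib)
  qed
  have sym: "(\<Sum>i<length b. \<Sum>k<length b. if k = i then 0 else H x y i k)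
      = (\<Sum>i<length b. \<Sum>k<length b. if k = i then 0 else H y x i k)"
  proof -
    have "H x y i k = H y x k i" if "i \<noteq> k" for i k
      unfolding H_def using that by (subst bs_swap) (simp add: list_update_swap)
    then have "(\<Sum>i<length b. \<Sum>k<length b. if k = i then 0 else H x y i k)
      = (\<Sum>i<length b. \<Sum>k<length b. if k = i then 0 else H y x k i)"
      by (intro sum.cong refl) auto
    also have "\<dots> = (\<Sum>k<length b. \<Sum>i<length b. if k = i then 0 else H y x k i)"
      by (rule sum.swap)
    also have "\<dots> = (\<Sum>i<length b. \<Sum>k<length b. if k = i then 0 else H y x i k)"
      by (intro sum.cong refl) auto
    finally show ?thesis .
  qed
  have jac: "bs y (b ! i) (\<lambda>z. bs x z (\<lambda>t. F (b[i := t]))) - bs x (b ! i) (\<lambda>z. bs y z (\<lambda>t. F (b[i := t])))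
      = bs x y (\<lambda>w. bs w (b ! i) (\<lambda>t. F (b[i := t])))" for i
    by (rule jacobi)
  have AB: "(\<Sum>i<length b. bs y (b ! i) (\<lambda>z. bs x z (\<lambda>t. F (b[i := t]))))
     - (\<Sum>i<length b. bs x (b ! i) (\<lambda>z. bs y z (\<lambda>t. F (b[i := t]))))
     = (\<Sum>i<length b. bs x y (\<lambda>w. bs w (b ! i) (\<lambda>t. F (b[i := t]))))"
    by (simp only: sum_subtractf[symmetric] jac)
  show ?thesis
    unfolding split[of x y] split[of y x] sym AB[symmetric] by simp
qed


lemma P1_BN:
  assumes x: "in_borel x" and y: "\<not> in_borel y" and b: "\<forall>t\<in>set b. \<not> in_borel t"
  shows "lam j (a @ x # y # b) - lam j (a @ y # x # b) = bs x y (\<lambda>z. lam j (a @ z # b))"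
proof -
  have 1: "lam j (a @ x # (y # b)) = borel_chi cc hh ll x * lam j (a @ y # b) + Dsum j x a (y # b) []"
    using lam_B[OF x, of "y # b"] b y by simp
  have 2: "lam j ((a @ [y]) @ x # b) = borel_chi cc hh ll x * lam j ((a @ [y]) @ b) + Dsum j x (a @ [y]) b []"
    using lam_B[OF x b, of j "a @ [y]"] by simp
  show ?thesis using 1 2 by (simp add: Dsum_cons)
qed


lemma P1: "lam j (a @ x # y # b) - lam j (a @ y # x # b) = bs x y (\<lambda>z. lam j (a @ z # b))"
proof (induction "length a + length b" arbitrary: a x y b rule: less_induct)
  case less
  note IH = less.hyps
  have Move: "lam j (a' @ u # c) = borel_chi cc hh ll u * lam j (a' @ c) + Dsum j u a' c []"
    if "in_borel u" "length a' + length c \<le> length a + length b" for a' u c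
    using that
  proof (induction c arbitrary: a')
    case Nil
    then show ?case using lam_B[of u "[]" j a'] by simp
  next
    case (Cons t c)
    have e1: "lam j (a' @ u # t # c) - lam j (a' @ t # u # c) = bs u t (\<lambda>z. lam j (a' @ z # c))"
      by (rule IH) (use Cons.prems in simp)
    have e2: "lam j ((a' @ [t]) @ u # c) = borel_chi cc hh ll u * lam j ((a' @ [t]) @ c) + Dsum j u (a' @ [t]) c []"
      by (rule Cons.IH) (use Cons.prems in auto)
    show ?case using e1 e2 by (simp add: Dsum_cons algebra_simps)
  qed
  show ?case
  proof (cases "\<forall>t\<in>set b. \<not> in_borel t")
    case False
    then obtain p where "rsplit b = Some p" by (cases "rsplit b") (auto simp: rsplit_None)
    then obtain b1 u b2 where "rsplit b = Some (b1, u, b2)" by (cases p) auto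
    from rsplit_Some[OF this] have b: "b = b1 @ u # b2" and u: "in_borel u"
      and b2: "\<forall>t\<in>set b2. \<not> in_borel t" by auto
    have L: "lam j (p @ u # b2) = borel_chi cc hh ll u * lam j (p @ b2) + Dsum j u p b2 []" for p
      by (rule lam_B[OF u b2])
    have A1: "lam j (a @ x # y # b) = borel_chi cc hh ll u * lam j (a @ x # y # b1 @ b2) + Dsum j u (a @ x # y # b1) b2 []"
      using L[of "a @ x # y # b1"] by (simp add: b)
    have A2: "lam j (a @ y # x # b) = borel_chi cc hh ll u * lam j (a @ y # x # b1 @ b2) + Dsum j u (a @ y # x # b1) b2 []"
      using L[of "a @ y # x # b1"] by (simp add: b)
    have A3: "bs x y (\<lambda>z. lam j (a @ z # b)) = bs x y (\<lambda>z. borel_chi cc hh ll u * lam j (a @ z # b1 @ b2) + Dsum j u (a @ z # b1) b2 [])"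
      by (rule bs_cong) (use L[of "a @ _ # b1"] in \<open>simp add: b\<close>)
    have I1: "lam j (a @ x # y # b1 @ b2) - lam j (a @ y # x # b1 @ b2) = bs x y (\<lambda>z. lam j (a @ z # b1 @ b2))"
      by (rule IH) (simp add: b)
    have pw: "lam j ((a @ x # y # b1) @ b2[i := t] @ []) - lam j ((a @ y # x # b1) @ b2[i := t] @ [])
        = bs x y (\<lambda>z. lam j ((a @ z # b1) @ b2[i := t] @ []))" for i t
      using IH[of a "b1 @ b2[i := t]" x y] by (simp add: b)
    have I2: "Dsum j u (a @ x # y # b1) b2 [] - Dsum j u (a @ y # x # b1) b2 [] = bs x y (\<lambda>z. Dsum j u (a @ z # b1) b2 [])"
    proof -
      have "Dsum j u (a @ x # y # b1) b2 [] - Dsum j u (a @ y # x # b1) b2 []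
         = (\<Sum>i<length b2. bs u (b2 ! i) (\<lambda>t. lam j ((a @ x # y # b1) @ b2[i := t] @ []) - lam j ((a @ y # x # b1) @ b2[i := t] @ [])))"
        unfolding Dsum_def by (simp only: bs_diff sum_subtractf)
      also have "\<dots> = (\<Sum>i<length b2. bs u (b2 ! i) (\<lambda>t. bs x y (\<lambda>z. lam j ((a @ z # b1) @ b2[i := t] @ []))))"
        by (simp only: pw)
      also have "\<dots> = (\<Sum>i<length b2. bs x y (\<lambda>z. bs u (b2 ! i) (\<lambda>t. lam j ((a @ z # b1) @ b2[i := t] @ []))))"
        by (rule sum.cong[OF refl], rule bs_swap)
      also have "\<dots> = bs x y (\<lambda>z. Dsum j u (a @ z # b1) b2 [])"
        unfolding Dsum_def by (simp only: bs_sum)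
      finally show ?thesis .
    qed
    show ?thesis unfolding A1 A2 A3 bs_add bs_cmult
      using I1 I2 by (simp add: algebra_simps)
  next
    case bN: True
    show ?thesis
    proof (cases "in_borel x")
      case xB: True
      show ?thesis
      proof (cases "in_borel y")
        case yB: True
        define G where "G = (\<lambda>c. lam j (a @ c @ []))"
        have DsG: "Dsum j w a c [] = (\<Sum>k<length c. bs w (c ! k) (\<lambda>t. G (c[k := t])))" for w c
          by (simp add: Dsum_def G_def)
        have Exp: "lam j (a @ x # y # b) = borel_chi cc hh ll y * (borel_chi cc hh ll x * lam j (a @ b) + Dsum j x a b [])
             + borel_chi cc hh ll x * Dsum j y a b []
             + (\<Sum>i<length b. bs y (b ! i) (\<lambda>z. Dsum j x a (b[i := z]) []))"
          if xB: "in_borel x" and yB: "in_borel y" for x y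
        proof -
          have 1: "lam j ((a @ [x]) @ y # b) = borel_chi cc hh ll y * lam j ((a @ [x]) @ b) + Dsum j y (a @ [x]) b []"
            by (rule lam_B[OF yB bN])
          have 2: "lam j (a @ x # b) = borel_chi cc hh ll x * lam j (a @ b) + Dsum j x a b []"
            by (rule lam_B[OF xB bN])
          have 3: "lam j (a @ x # b[i := z]) = borel_chi cc hh ll x * lam j (a @ b[i := z]) + Dsum j x a (b[i := z]) []" for i z
            by (rule Move[OF xB]) simp
          have "Dsum j y (a @ [x]) b [] = (\<Sum>i<length b. bs y (b ! i) (\<lambda>z. borel_chi cc hh ll x * lam j (a @ b[i := z]) + Dsum j x a (b[i := z]) []))"
            unfolding Dsum_def[of j y "a @ [x]"] by (simp only: 3 append_Cons append_Nil append_assoc append_Nil2)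
          also have "\<dots> = borel_chi cc hh ll x * Dsum j y a b [] + (\<Sum>i<length b. bs y (b ! i) (\<lambda>z. Dsum j x a (b[i := z]) []))"
            unfolding Dsum_def[of j y a b] by (simp only: bs_add bs_cmult sum.distrib sum_distrib_left append_Nil2)
          finally show ?thesis using 1 2 by simp
        qed
        have RHS: "bs x y (\<lambda>w. lam j (a @ w # b)) = (\<Sum>i<length b. bs x y (\<lambda>w. bs w (b ! i) (\<lambda>t. G (b[i := t]))))"
        proof -
          have "bs x y (\<lambda>w. lam j (a @ w # b)) = bs x y (\<lambda>w. lam j (a @ b) * borel_chi cc hh ll w + Dsum j w a b [])"
            by (rule bs_cong) (simp add: lam_B[OF B_closed[OF xB yB] bN] mult.commute)
          also have "\<dots> = (\<Sum>i<length b. bs x y (\<lambda>w. bs w (b ! i) (\<lambda>t. G (b[i := t]))))"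
            by (simp add: bs_add bs_cmult chi_char[OF xB yB] DsG bs_sum)
          finally show ?thesis .
        qed
        have DD: "(\<Sum>i<length b. bs y (b ! i) (\<lambda>z. Dsum j x a (b[i := z]) []))
            - (\<Sum>i<length b. bs x (b ! i) (\<lambda>z. Dsum j y a (b[i := z]) []))
            = (\<Sum>i<length b. bs x y (\<lambda>w. bs w (b ! i) (\<lambda>t. G (b[i := t]))))"
          using DD_lemma[where F=G and b=b and x=x and y=y] by (simp only: DsG)
        show ?thesis
          unfolding Exp[OF xB yB] Exp[OF yB xB] RHS DD[symmetric]
          by (simp add: algebra_simps)
      next
        case False
        then show ?thesis by (rule P1_BN[OF xB _ bN])
      qed
    next
      case xN: False
      show ?thesis
      proof (cases "in_borel y")
        case True
        have "lam j (a @ y # x # b) - lam j (a @ x # y # b) = bs y x (\<lambda>z. lam j (a @ z # b))"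
          by (rule P1_BN[OF True xN bN])
        moreover have "bs y x (\<lambda>z. lam j (a @ z # b)) = - bs x y (\<lambda>z. lam j (a @ z # b))"
          by (rule bs_anti)
        ultimately show ?thesis by (simp add: algebra_simps)
      next
        case yN: False
        show ?thesis
        proof (cases "\<forall>t\<in>set a. \<not> in_borel t")
          case aN: True
          have "bs x y (\<lambda>z. lam j (a @ z # b)) = bs x y (\<lambda>z. phi j (a @ z # b))"
            by (rule bs_cong) (use aN bN N_closed[OF xN yN] in \<open>auto intro!: lam_N\<close>)
          moreover have "lam j (a @ x # y # b) = phi j (a @ x # y # b)" "lam j (a @ y # x # b) = phi j (a @ y # x # b)"
            by (rule lam_N, use aN bN xN yN in auto)+
          ultimately show ?thesis by (simp add: phi_rel)
        next
          case False
          then obtain p where "rsplit a = Some p" by (cases "rsplit a") (auto simp: rsplit_None)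
          then obtain a1 u a2 where "rsplit a = Some (a1, u, a2)" by (cases p) auto
          from rsplit_Some[OF this] have a: "a = a1 @ u # a2" and u: "in_borel u"
            and a2: "\<forall>t\<in>set a2. \<not> in_borel t" by auto
          define q where "q = a1 @ a2"
          have Ex: "lam j (a @ v # w # b) = borel_chi cc hh ll u * lam j (q @ v # w # b) + Dsum j u a1 a2 (v # w # b)
              + bs u v (\<lambda>t. lam j (q @ t # w # b)) + bs u w (\<lambda>t. lam j (q @ v # t # b)) + Dsum j u (q @ [v, w]) b []"
            if "\<not> in_borel v" "\<not> in_borel w" for v w
          proof -
            have "lam j (a1 @ u # (a2 @ v # w # b)) = borel_chi cc hh ll u * lam j (a1 @ (a2 @ v # w # b)) + Dsum j u a1 (a2 @ v # w # b) []"
              by (rule lam_B[OF u]) (use a2 bN that in auto)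
            then show ?thesis by (simp add: a q_def Dsum_append Dsum_cons)
          qed
          have Ez: "lam j (a @ z # b) = borel_chi cc hh ll u * lam j (q @ z # b) + Dsum j u a1 a2 (z # b)
              + bs u z (\<lambda>t. lam j (q @ t # b)) + Dsum j u (q @ [z]) b []"
            if "\<not> in_borel z" for z
          proof -
            have "lam j (a1 @ u # (a2 @ z # b)) = borel_chi cc hh ll u * lam j (a1 @ (a2 @ z # b)) + Dsum j u a1 (a2 @ z # b) []"
              by (rule lam_B[OF u]) (use a2 bN that in auto)
            then show ?thesis by (simp add: a q_def Dsum_append Dsum_cons)
          qed
          have lq: "length q + length b < length a + length b" by (simp add: a q_def)
          have I1: "lam j (q @ x # y # b) - lam j (q @ y # x # b) = bs x y (\<lambda>z. lam j (q @ z # b))"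
            by (rule IH) (rule lq)
          have I2: "Dsum j u a1 a2 (x # y # b) - Dsum j u a1 a2 (y # x # b) = bs x y (\<lambda>z. Dsum j u a1 a2 (z # b))"
          proof -
            have pw: "lam j (a1 @ a2[i := t] @ x # y # b) - lam j (a1 @ a2[i := t] @ y # x # b)
               = bs x y (\<lambda>z. lam j (a1 @ a2[i := t] @ z # b))" for i t
              using IH[of "a1 @ a2[i := t]" b x y] by (simp add: a)
            have "Dsum j u a1 a2 (x # y # b) - Dsum j u a1 a2 (y # x # b)
               = (\<Sum>i<length a2. bs u (a2 ! i) (\<lambda>t. lam j (a1 @ a2[i := t] @ x # y # b) - lam j (a1 @ a2[i := t] @ y # x # b)))"
              unfolding Dsum_def by (simp only: bs_diff sum_subtractf)
            also have "\<dots> = (\<Sum>i<length a2. bs u (a2 ! i) (\<lambda>t. bs x y (\<lambda>z. lam j (a1 @ a2[i := t] @ z # b))))"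
              by (simp only: pw)
            also have "\<dots> = (\<Sum>i<length a2. bs x y (\<lambda>z. bs u (a2 ! i) (\<lambda>t. lam j (a1 @ a2[i := t] @ z # b))))"
              by (rule sum.cong[OF refl], rule bs_swap)
            also have "\<dots> = bs x y (\<lambda>z. Dsum j u a1 a2 (z # b))"
              unfolding Dsum_def by (simp only: bs_sum)
            finally show ?thesis .
          qed
          have I3: "Dsum j u (q @ [x, y]) b [] - Dsum j u (q @ [y, x]) b [] = bs x y (\<lambda>z. Dsum j u (q @ [z]) b [])"
          proof -
            have pw: "lam j ((q @ [x, y]) @ b[i := t] @ []) - lam j ((q @ [y, x]) @ b[i := t] @ [])
               = bs x y (\<lambda>z. lam j ((q @ [z]) @ b[i := t] @ []))" for i t
              using IH[of q "b[i := t]" x y] lq by simp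
            have "Dsum j u (q @ [x, y]) b [] - Dsum j u (q @ [y, x]) b []
               = (\<Sum>i<length b. bs u (b ! i) (\<lambda>t. lam j ((q @ [x, y]) @ b[i := t] @ []) - lam j ((q @ [y, x]) @ b[i := t] @ [])))"
              unfolding Dsum_def by (simp only: bs_diff sum_subtractf)
            also have "\<dots> = (\<Sum>i<length b. bs u (b ! i) (\<lambda>t. bs x y (\<lambda>z. lam j ((q @ [z]) @ b[i := t] @ []))))"
              by (simp only: pw)
            also have "\<dots> = (\<Sum>i<length b. bs x y (\<lambda>z. bs u (b ! i) (\<lambda>t. lam j ((q @ [z]) @ b[i := t] @ []))))"
              by (rule sum.cong[OF refl], rule bs_swap)
            also have "\<dots> = bs x y (\<lambda>z. Dsum j u (q @ [z]) b [])"
              unfolding Dsum_def by (simp only: bs_sum)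
            finally show ?thesis .
          qed
          have I4: "bs u x (\<lambda>t. lam j (q @ t # y # b)) + bs u y (\<lambda>t. lam j (q @ x # t # b))
              - bs u y (\<lambda>t. lam j (q @ t # x # b)) - bs u x (\<lambda>t. lam j (q @ y # t # b))
              = bs x y (\<lambda>z. bs u z (\<lambda>t. lam j (q @ t # b)))"
          proof -
            have e1: "lam j (q @ t # y # b) - lam j (q @ y # t # b) = bs t y (\<lambda>s. lam j (q @ s # b))" for t
              by (rule IH) (rule lq)
            have e2: "lam j (q @ x # t # b) - lam j (q @ t # x # b) = bs x t (\<lambda>s. lam j (q @ s # b))" for t
              by (rule IH) (rule lq)
            have "bs u x (\<lambda>t. lam j (q @ t # y # b)) + bs u y (\<lambda>t. lam j (q @ x # t # b))
              - bs u y (\<lambda>t. lam j (q @ t # x # b)) - bs u x (\<lambda>t. lam j (q @ y # t # b))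
              = bs u x (\<lambda>t. lam j (q @ t # y # b) - lam j (q @ y # t # b))
               + bs u y (\<lambda>t. lam j (q @ x # t # b) - lam j (q @ t # x # b))"
              by (simp add: bs_diff)
            also have "\<dots> = bs u x (\<lambda>t. bs t y (\<lambda>s. lam j (q @ s # b))) + bs u y (\<lambda>t. bs x t (\<lambda>s. lam j (q @ s # b)))"
              by (simp only: e1 e2)
            also have "\<dots> = bs x y (\<lambda>z. bs u z (\<lambda>t. lam j (q @ t # b)))"
              using jacobi[of x y u "\<lambda>s. lam j (q @ s # b)"] by (simp add: algebra_simps)
            finally show ?thesis .
          qed
          have R: "bs x y (\<lambda>z. lam j (a @ z # b)) = bs x y (\<lambda>z. borel_chi cc hh ll u * lam j (q @ z # b) + Dsum j u a1 a2 (z # b)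
              + bs u z (\<lambda>t. lam j (q @ t # b)) + Dsum j u (q @ [z]) b [])"
            by (rule bs_cong) (rule Ez, rule N_closed[OF xN yN])
          show ?thesis
            unfolding Ex[OF xN yN] Ex[OF yN xN] R bs_add bs_cmult
            using I1 I2 I3 I4 by (simp add: algebra_simps)
        qed
      qed
    qed
  qed
qed

end


lemma minus_fun_apply': "(f - g) x = f x - (g x :: 'b :: minus)"
  by (simp add: fun_diff_def)

lemma sum_fun_apply': "(\<Sum>i\<in>S. F i) x = (\<Sum>i\<in>S. F i x :: 'b :: comm_monoid_add)"
  by (induction S rule: infinite_finite_induct) auto

lemma cscale_apply[simp]: "cscale c f x = c * f x"
  by (simp add: cscale_def)

lemma cmod: "module (cscale :: complex \<Rightarrow> ('a \<Rightarrow> complex) \<Rightarrow> 'a \<Rightarrow> complex)"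
  by unfold_locales (auto simp: cscale_def fun_eq_iff algebra_simps)

lemma ind_apply: "ind a z = (if z = a then 1 else 0)"
  by (simp add: ind_def)

lemma finsupp_iff: "f \<in> finsupp \<longleftrightarrow> finite {z. f z \<noteq> 0}"
  by (simp add: finsupp_def)

lemma finsupp_add: "f \<in> finsupp \<Longrightarrow> g \<in> finsupp \<Longrightarrow> f + g \<in> finsupp"
  unfolding finsupp_iff by (rule finite_subset[of _ "{z. f z \<noteq> 0} \<union> {z. g z \<noteq> 0}"]) auto

lemma finsupp_scale: "f \<in> finsupp \<Longrightarrow> cscale c f \<in> finsupp"
  unfolding finsupp_iff by (rule finite_subset[of _ "{z. f z \<noteq> 0}"]) auto

lemma finsupp_zero: "0 \<in> finsupp"
  by (simp add: finsupp_iff)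

lemma finsupp_ind: "ind a \<in> finsupp"
  unfolding finsupp_iff ind_def by simp

lemma csub_finsupp: "csubspace finsupp"
  by (rule module.subspaceI[OF cmod]) (auto intro: finsupp_add finsupp_scale finsupp_zero)

lemma finsupp_diff: "f \<in> finsupp \<Longrightarrow> g \<in> finsupp \<Longrightarrow> f - g \<in> finsupp"
  by (rule module.subspace_diff[OF cmod csub_finsupp])

lemma finsupp_sum: "(\<And>i. i \<in> S \<Longrightarrow> F i \<in> finsupp) \<Longrightarrow> sum F S \<in> finsupp"
  by (rule module.subspace_sum[OF cmod csub_finsupp])

lemma fin_decomp: "f \<in> finsupp \<Longrightarrow> f = (\<Sum>p\<in>{p. f p \<noteq> 0}. cscale (f p) (ind p))"
proof (rule ext)
  fix x assume f: "f \<in> finsupp"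
  have "(\<Sum>p\<in>{p. f p \<noteq> 0}. cscale (f p) (ind p)) x = (\<Sum>p\<in>{p. f p \<noteq> 0}. f p * (if x = p then 1 else 0))"
    by (simp add: sum_fun_apply' ind_apply)
  also have "\<dots> = (\<Sum>p\<in>{p. f p \<noteq> 0}. if x = p then f p else 0)"
    by (rule sum.cong) auto
  also have "\<dots> = f x"
    using f by (simp add: finsupp_iff)
  finally show "f x = (\<Sum>p\<in>{p. f p \<noteq> 0}. cscale (f p) (ind p)) x" by simp
qed

lemma fs_induct:
  assumes f: "f \<in> finsupp" and S: "csubspace S" and ind: "\<And>p. ind p \<in> S"
  shows "f \<in> S"
proof -
  have "(\<Sum>p\<in>{p. f p \<noteq> 0}. cscale (f p) (ind p)) \<in> S"
    by (rule module.subspace_sum[OF cmod S]) (rule module.subspace_scale[OF cmod S ind])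
  then show ?thesis using fin_decomp[OF f] by simp
qed

definition lin :: "('a \<Rightarrow> complex) \<Rightarrow> ('a \<Rightarrow> complex) \<Rightarrow> complex" where
  "lin \<mu> f = (\<Sum>p\<in>{p. f p \<noteq> 0}. f p * \<mu> p)"

lemma lin_superset: "finite S \<Longrightarrow> {p. f p \<noteq> 0} \<subseteq> S \<Longrightarrow> lin \<mu> f = (\<Sum>p\<in>S. f p * \<mu> p)"
  unfolding lin_def by (rule sum.mono_neutral_left) auto

lemma lin_add: "f \<in> finsupp \<Longrightarrow> g \<in> finsupp \<Longrightarrow> lin \<mu> (f + g) = lin \<mu> f + lin \<mu> g"
proof -
  assume f: "f \<in> finsupp" and g: "g \<in> finsupp"
  let ?S = "{p. f p \<noteq> 0} \<union> {p. g p \<noteq> 0}"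
  have fin: "finite ?S" using f g by (simp add: finsupp_iff)
  have "lin \<mu> (f + g) = (\<Sum>p\<in>?S. (f + g) p * \<mu> p)" by (rule lin_superset[OF fin]) auto
  also have "\<dots> = (\<Sum>p\<in>?S. f p * \<mu> p) + (\<Sum>p\<in>?S. g p * \<mu> p)"
    by (simp add: distrib_right sum.distrib)
  also have "(\<Sum>p\<in>?S. f p * \<mu> p) = lin \<mu> f" by (rule lin_superset[OF fin, symmetric]) auto
  also have "(\<Sum>p\<in>?S. g p * \<mu> p) = lin \<mu> g" by (rule lin_superset[OF fin, symmetric]) auto
  finally show ?thesis .
qed

lemma lin_scale: "lin \<mu> (cscale c f) = c * lin \<mu> f"
proof (cases "c = 0")
  case True then show ?thesis by (simp add: lin_def cscale_def)
next
  case False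
  then have "{p. cscale c f p \<noteq> 0} = {p. f p \<noteq> 0}" by auto
  then show ?thesis unfolding lin_def by (simp add: sum_distrib_left ac_simps)
qed

lemma lin_zero: "lin \<mu> 0 = 0"
  by (simp add: lin_def)

lemma lin_ind: "lin \<mu> (ind p) = \<mu> p"
  by (subst lin_superset[of "{p}"]) (auto simp: ind_apply)

lemma lin_diff: "f \<in> finsupp \<Longrightarrow> g \<in> finsupp \<Longrightarrow> lin \<mu> (f - g) = lin \<mu> f - lin \<mu> g"
proof -
  assume f: "f \<in> finsupp" and g: "g \<in> finsupp"
  have e: "f - g = f + cscale (-1) g" by (simp add: fun_eq_iff minus_fun_apply')
  have "lin \<mu> (f - g) = lin \<mu> (f + cscale (-1) g)" by (simp only: e)
  also have "\<dots> = lin \<mu> f + lin \<mu> (cscale (-1) g)" by (rule lin_add[OF f finsupp_scale[OF g]])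
  finally show ?thesis by (simp add: lin_scale)
qed

lemma lin_sum: "(\<And>i. i \<in> S \<Longrightarrow> F i \<in> finsupp) \<Longrightarrow> lin \<mu> (sum F S) = (\<Sum>i\<in>S. lin \<mu> (F i))"
proof (induction S rule: infinite_finite_induct)
  case (infinite A) then show ?case by (simp add: lin_def)
next
  case empty then show ?case by (simp add: lin_def)
next
  case (insert x F')
  have "lin \<mu> (sum F (insert x F')) = lin \<mu> (F x + sum F F')"
    by (simp only: sum.insert[OF insert.hyps])
  also have "\<dots> = lin \<mu> (F x) + lin \<mu> (sum F F')"
    by (rule lin_add) (use insert.prems in \<open>auto intro: finsupp_sum\<close>)
  also have "lin \<mu> (sum F F') = (\<Sum>i\<in>F'. lin \<mu> (F i))"
    by (rule insert.IH) (use insert.prems in auto)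
  finally show ?case by (simp only: sum.insert[OF insert.hyps])
qed

lemma csub_lin: "csubspace {f. f \<in> finsupp \<and> lin \<mu> f = 0}"
  by (rule module.subspaceI[OF cmod]) (auto intro: finsupp_add finsupp_scale finsupp_zero simp: lin_add lin_scale lin_zero)


lemma sw_split: "length a + length b \<le> length w \<Longrightarrow> take (length a) w = a \<Longrightarrow> drop (length w - length b) w = b
   \<Longrightarrow> w = a @ drop (length a) (take (length w - length b) w) @ b"
proof -
  assume l: "length a + length b \<le> length w" and t: "take (length a) w = a" and d: "drop (length w - length b) w = b"
  have "w = take (length w - length b) w @ drop (length w - length b) w" by simp
  also have "take (length w - length b) w = take (length a) (take (length w - length b) w) @ drop (length a) (take (length w - length b) w)"
    by (rule append_take_drop_id[symmetric])
  also have "take (length a) (take (length w - length b) w) = a"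
  proof -
    have "length a \<le> length w - length b" using l by arith
    then have "take (length a) (take (length w - length b) w) = take (length a) w" by (simp add: min_def)
    then show ?thesis using t by simp
  qed
  finally show ?thesis using d by simp
qed

lemma sandwich_app[simp]: "sandwich a f b (a @ m @ b) = f m"
  by (simp add: sandwich_def)

lemma sandwich_other: "(\<And>m. w \<noteq> a @ m @ b) \<Longrightarrow> sandwich a f b w = 0"
  unfolding sandwich_def using sw_split by metis

lemma sandwich_ind: "sandwich a (ind m) b = ind (a @ m @ b)"
proof (rule ext)
  fix w
  show "sandwich a (ind m) b w = ind (a @ m @ b) w"
  proof (cases "\<exists>m'. w = a @ m' @ b")
    case True
    then obtain m' where "w = a @ m' @ b" by auto
    then show ?thesis by (simp add: ind_apply)
  next
    case False
    then show ?thesis by (auto simp: ind_apply intro!: sandwich_other)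
  qed
qed

lemma sandwich_diff: "sandwich a (f - g) b = sandwich a f b - sandwich a g b"
  by (simp add: sandwich_def fun_eq_iff minus_fun_apply')

lemma sandwich_scale: "sandwich a (cscale c f) b = cscale c (sandwich a f b)"
  by (simp add: sandwich_def fun_eq_iff)

lemma sandwich_sum: "sandwich a (\<Sum>i\<in>S. F i) b = (\<Sum>i\<in>S. sandwich a (F i) b)"
proof (rule ext)
  have sif: "(\<Sum>i\<in>S. if P then f i else 0) = (if P then (\<Sum>i\<in>S. f i) else 0)" for P and f :: "_ \<Rightarrow> complex"
    by (cases P) auto
  fix w show "sandwich a (\<Sum>i\<in>S. F i) b w = (\<Sum>i\<in>S. sandwich a (F i) b) w"
    unfolding sandwich_def sum_fun_apply' sif ..
qed

lemma lie_rel_dec: "lie_rel x y = ind [x, y] - ind [y, x] - (\<Sum>z\<in>set (bz x y). cscale (brk x y z) (ind [z]))"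
proof (rule ext)
  fix w
  have "(\<Sum>z\<in>set (bz x y). brk x y z * ind [z] w) = (case w of [z] \<Rightarrow> brk x y z | _ \<Rightarrow> 0)"
  proof (cases "\<exists>z. w = [z]")
    case True
    then obtain z where w: "w = [z]" by auto
    have "(\<Sum>z'\<in>set (bz x y). brk x y z' * ind [z'] w) = (\<Sum>z'\<in>set (bz x y). if z' = z then brk x y z' else 0)"
      by (rule sum.cong) (auto simp: w ind_apply)
    also have "\<dots> = brk x y z" using brk_nz[of x y z] by (auto simp: sum.delta')
    finally show ?thesis by (simp add: w)
  next
    case False
    then have "(\<Sum>z'\<in>set (bz x y). brk x y z' * ind [z'] w) = 0"
      by (intro sum.neutral) (auto simp: ind_apply)
    moreover have "(case w of [z] \<Rightarrow> brk x y z | _ \<Rightarrow> 0) = 0"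
      using False by (cases w rule: remdups_adj.cases) auto
    ultimately show ?thesis by simp
  qed
  then show "lie_rel x y w = (ind [x, y] - ind [y, x] - (\<Sum>z\<in>set (bz x y). cscale (brk x y z) (ind [z]))) w"
    by (simp add: lie_rel_def minus_fun_apply' sum_fun_apply')
qed

lemma sandwich_lie: "sandwich a (lie_rel x y) b
   = ind (a @ x # y # b) - ind (a @ y # x # b) - (\<Sum>z\<in>set (bz x y). cscale (brk x y z) (ind (a @ z # b)))"
  by (simp add: lie_rel_dec sandwich_diff sandwich_sum sandwich_scale sandwich_ind)

lemma sandwich_borel: "sandwich a (ind [x] - cscale c (ind [])) [] = ind (a @ [x]) - cscale c (ind a)"
  by (simp add: sandwich_diff sandwich_scale sandwich_ind)

lemma lin_lie: "lin \<mu> (sandwich a (lie_rel x y) b)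
   = \<mu> (a @ x # y # b) - \<mu> (a @ y # x # b) - bs x y (\<lambda>z. \<mu> (a @ z # b))"
  unfolding sandwich_lie bs_def
  by (simp add: lin_diff lin_sum lin_scale lin_ind finsupp_diff finsupp_ind finsupp_sum finsupp_scale)

lemma lin_borel: "lin \<mu> (sandwich a (ind [x] - cscale c (ind [])) []) = \<mu> (a @ [x]) - c * \<mu> a"
  unfolding sandwich_borel
  by (simp add: lin_diff lin_scale lin_ind finsupp_ind finsupp_scale)

lemma kgen_finsupp: "g \<in> verma_kgen c h l \<Longrightarrow> g \<in> finsupp"
  unfolding verma_kgen_def
  by (auto simp: sandwich_lie sandwich_borel intro!: finsupp_diff finsupp_ind finsupp_sum finsupp_scale)

definition emb :: "int \<Rightarrow> (Dgen list \<Rightarrow> complex) \<Rightarrow> (Dgen list \<times> int \<Rightarrow> complex)" where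
  "emb j0 g = (\<lambda>(w, j). if j = j0 then g w else 0)"

lemma emb_finsupp: "g \<in> finsupp \<Longrightarrow> emb j0 g \<in> finsupp"
proof -
  assume g: "g \<in> finsupp"
  have sub: "{p. emb j0 g p \<noteq> 0} \<subseteq> (\<lambda>w. (w, j0)) ` {w. g w \<noteq> 0}"
    by (auto simp: emb_def split: if_splits)
  have fin: "finite {w. g w \<noteq> 0}" using g by (simp add: finsupp_iff)
  show ?thesis unfolding finsupp_iff by (rule finite_surj[OF fin sub])
qed

lemma lin_emb: "lin \<mu> (emb j0 g) = lin (\<lambda>w. \<mu> (w, j0)) g"
proof -
  have S: "{p. emb j0 g p \<noteq> 0} = (\<lambda>w. (w, j0)) ` {w. g w \<noteq> 0}"
    by (auto simp: emb_def split: if_splits)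
  have "lin \<mu> (emb j0 g) = (\<Sum>p\<in>(\<lambda>w. (w, j0)) ` {w. g w \<noteq> 0}. emb j0 g p * \<mu> p)"
    unfolding lin_def S ..
  also have "\<dots> = (\<Sum>w\<in>{w. g w \<noteq> 0}. emb j0 g (w, j0) * \<mu> (w, j0))"
    by (subst sum.reindex) (auto simp: inj_on_def)
  also have "\<dots> = lin (\<lambda>w. \<mu> (w, j0)) g"
    by (simp add: lin_def emb_def)
  finally show ?thesis .
qed

lemma KA_alt: "KA c h l = cspan {emb j0 g | g j0. g \<in> verma_kgen c h l}"
  unfolding KA_def emb_def ..

lemma KA_finsupp: "KA c h l \<subseteq> finsupp"
  unfolding KA_alt
  by (rule module.span_minimal[OF cmod _ csub_finsupp]) (auto intro: emb_finsupp kgen_finsupp)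

context
  fixes cc hh ll al be ga :: complex and jt :: int
begin

abbreviation "LAM \<equiv> lam cc hh ll al be ga jt"

definition LL :: "(Dgen list \<times> int \<Rightarrow> complex) \<Rightarrow> complex" where
  "LL f = lin (\<lambda>p. LAM (snd p) (fst p)) f"

lemma LL_kgen: "g \<in> verma_kgen cc hh ll \<Longrightarrow> LL (emb j0 g) = 0"
  unfolding verma_kgen_def LL_def lin_emb
  by (auto simp: lin_lie lin_borel P1 lam_B[where b="[]", simplified])

lemma LL_KA: "f \<in> KA cc hh ll \<Longrightarrow> f \<in> finsupp \<and> LL f = 0"
proof -
  assume f: "f \<in> KA cc hh ll"
  have "KA cc hh ll \<subseteq> {f. f \<in> finsupp \<and> LL f = 0}"
    unfolding KA_alt LL_def
    by (rule module.span_minimal[OF cmod _ csub_lin])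
       (auto intro: emb_finsupp kgen_finsupp simp: LL_kgen[unfolded LL_def])
  then show ?thesis using f by auto
qed

end


lemma plus_apply': "(f + g) x = f x + (g x :: 'b :: plus)" by simp

lemma actMA_add: "actMA a b g x (F + G) = actMA a b g x F + actMA a b g x G"
  by (rule ext) (auto simp: actMA_def algebra_simps split: list.splits)

lemma actMA_scale: "actMA a b g x (cscale c F) = cscale c (actMA a b g x F)"
  by (rule ext) (auto simp: actMA_def algebra_simps split: list.splits)

lemma actMA_zero: "actMA a b g x 0 = 0"
  by (rule ext) (auto simp: actMA_def split: list.splits)

lemma actMA_diff: "actMA a b g x (F - G) = actMA a b g x F - actMA a b g x G"
  by (rule ext) (auto simp: actMA_def algebra_simps minus_fun_apply' split: list.splits)

lemma actMA_sum: "actMA a b g x (\<Sum>i\<in>S. F i) = (\<Sum>i\<in>S. actMA a b g x (F i))"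
proof (induction S rule: infinite_finite_induct)
  case (infinite A) then show ?case by (simp only: sum.infinite[OF infinite] actMA_zero)
next
  case empty then show ?case by (simp only: sum.empty actMA_zero)
next
  case (insert i0 S0) then show ?case by (simp only: sum.insert[OF insert.hyps] actMA_add insert.IH)
qed

lemma actMA_ind: "actMA a b g x (ind (w, j)) = ind (x # w, j) + cscale (coefA a b g x j) (ind (w, j + shA x))"
proof (rule ext)
  fix p :: "Dgen list \<times> int"
  obtain w' j' where p: "p = (w', j')" by (cases p)
  show "actMA a b g x (ind (w, j)) p = (ind (x # w, j) + cscale (coefA a b g x j) (ind (w, j + shA x))) p"
    unfolding p by (cases w') (auto simp: actMA_def ind_apply)
qed

lemma csub_pre: "csubspace S \<Longrightarrow> csubspace {f. actMA a b g x f \<in> S}"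
  by (rule module.subspaceI[OF cmod])
     (auto simp: actMA_add actMA_scale actMA_zero intro: module.subspace_add[OF cmod] module.subspace_scale[OF cmod] module.subspace_0[OF cmod])

lemma actMA_finsupp: "f \<in> finsupp \<Longrightarrow> actMA a b g x f \<in> finsupp"
proof -
  assume f: "f \<in> finsupp"
  have "f \<in> {f. actMA a b g x f \<in> finsupp}"
  proof (rule fs_induct[OF f csub_pre[OF csub_finsupp]])
    fix p :: "Dgen list \<times> int"
    obtain w j where p: "p = (w, j)" by (cases p)
    show "ind p \<in> {f. actMA a b g x f \<in> finsupp}"
      by (simp add: p actMA_ind finsupp_add finsupp_ind finsupp_scale)
  qed
  then show ?thesis by simp
qed

lemma actw_finsupp: "f \<in> finsupp \<Longrightarrow> actw (actMA a b g) xs f \<in> finsupp"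
  by (induction xs) (simp_all add: actMA_finsupp)

lemma actw_add: "actw (actMA a b g) xs (F + G) = actw (actMA a b g) xs F + actw (actMA a b g) xs G"
  proof (induction xs)
    case Nil then show ?case by (simp only: actw.simps)
  next
    case (Cons y xs) then show ?case by (simp only: actw.simps actMA_add)
  qed

lemma actw_scale: "actw (actMA a b g) xs (cscale c F) = cscale c (actw (actMA a b g) xs F)"
  proof (induction xs)
    case Nil then show ?case by (simp only: actw.simps)
  next
    case (Cons y xs) then show ?case by (simp only: actw.simps actMA_scale)
  qed

lemma actw_zero: "actw (actMA a b g) xs 0 = 0"
  proof (induction xs)
    case Nil then show ?case by (simp only: actw.simps)
  next
    case (Cons y xs) then show ?case by (simp only: actw.simps actMA_zero)
  qed

lemma actw_diff: "actw (actMA a b g) xs (F - G) = actw (actMA a b g) xs F - actw (actMA a b g) xs G"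
  proof (induction xs)
    case Nil then show ?case by (simp only: actw.simps)
  next
    case (Cons y xs) then show ?case by (simp only: actw.simps actMA_diff)
  qed

lemma actw_sum: "actw (actMA a b g) xs (\<Sum>i\<in>S. F i) = (\<Sum>i\<in>S. actw (actMA a b g) xs (F i))"
proof (induction S rule: infinite_finite_induct)
  case (infinite A) then show ?case by (simp only: sum.infinite[OF infinite] actw_zero)
next
  case empty then show ?case by (simp only: sum.empty actw_zero)
next
  case (insert i0 S0) then show ?case by (simp only: sum.insert[OF insert.hyps] actw_add insert.IH)
qed

definition pre :: "Dgen \<Rightarrow> (Dgen list \<Rightarrow> complex) \<Rightarrow> (Dgen list \<Rightarrow> complex)" where
  "pre x g = (\<lambda>w. case w of [] \<Rightarrow> 0 | y # w' \<Rightarrow> if y = x then g w' else 0)"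

lemma pre_sandwich: "pre x (sandwich a f b) = sandwich (x # a) f b"
proof (rule ext)
  fix w
  show "pre x (sandwich a f b) w = sandwich (x # a) f b w"
  proof (cases "\<exists>m. w = (x # a) @ m @ b")
    case True
    then obtain m where w: "w = (x # a) @ m @ b" by auto
    have "sandwich (x # a) f b w = f m" unfolding w by (rule sandwich_app)
    then show ?thesis by (simp add: pre_def w)
  next
    case False
    then have r: "sandwich (x # a) f b w = 0" by (auto intro: sandwich_other)
    show ?thesis
    proof (cases w)
      case Nil then show ?thesis using r by (simp add: pre_def)
    next
      case (Cons y w')
      have r': "sandwich (x # a) f b (y # w') = 0" using r Cons by simp
      show ?thesis
      proof (cases "y = x")
        case True
        with False Cons have "\<And>m. w' \<noteq> a @ m @ b" by auto
        then show ?thesis using r' by (simp add: pre_def Cons True sandwich_other)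
      next
        case False then show ?thesis using r' by (simp add: pre_def Cons)
      qed
    qed
  qed
qed

lemma actMA_emb: "actMA a b g x (emb j0 G) = emb j0 (pre x G) + cscale (coefA a b g x j0) (emb (j0 + shA x) G)"
proof (rule ext)
  fix p :: "Dgen list \<times> int"
  obtain w' j' where p: "p = (w', j')" by (cases p)
  show "actMA a b g x (emb j0 G) p = (emb j0 (pre x G) + cscale (coefA a b g x j0) (emb (j0 + shA x) G)) p"
    unfolding p by (cases w') (auto simp: actMA_def emb_def pre_def)
qed

lemma pre_kgen: "G \<in> verma_kgen c h l \<Longrightarrow> pre x G \<in> verma_kgen c h l"
proof -
  assume "G \<in> verma_kgen c h l"
  then consider (lie) a x' y b where "G = sandwich a (lie_rel x' y) b"
    | (bor) a x' where "G = sandwich a (ind [x'] - cscale (borel_chi c h l x') (ind [])) []" "in_borel x'"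
    unfolding verma_kgen_def by blast
  then show ?thesis
  proof cases
    case lie
    then have "pre x G = sandwich (x # a) (lie_rel x' y) b" by (simp add: pre_sandwich)
    then show ?thesis unfolding verma_kgen_def by blast
  next
    case bor
    then have "pre x G = sandwich (x # a) (ind [x'] - cscale (borel_chi c h l x') (ind [])) []" by (simp add: pre_sandwich)
    then show ?thesis unfolding verma_kgen_def using bor(2) by blast
  qed
qed

lemma KA_gen: "G \<in> verma_kgen c h l \<Longrightarrow> emb j0 G \<in> KA c h l"
  unfolding KA_alt by (rule module.span_base[OF cmod]) auto

lemma csub_KA: "csubspace (KA c h l)"
  unfolding KA_alt by (rule module.subspace_span[OF cmod])

lemma actMA_KA: "f \<in> KA c h l \<Longrightarrow> actMA a b g x f \<in> KA c h l"
proof -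
  assume f: "f \<in> KA c h l"
  have "KA c h l \<subseteq> {f. actMA a b g x f \<in> KA c h l}"
    unfolding KA_alt[of c h l, symmetric] 
    apply (subst (1) KA_alt)
    apply (rule module.span_minimal[OF cmod _ csub_pre[OF csub_KA]])
    apply (auto simp: actMA_emb intro!: module.subspace_add[OF cmod csub_KA] module.subspace_scale[OF cmod csub_KA] KA_gen pre_kgen)
    done
  then show ?thesis using f by auto
qed

lemma actw_KA: "f \<in> KA c h l \<Longrightarrow> actw (actMA a b g) xs f \<in> KA c h l"
  by (induction xs) (simp_all add: actMA_KA)


lemma cscale_add: "cscale c (F + G) = cscale c F + cscale c G"
  by (rule ext) (simp add: algebra_simps)

lemma cscale_sum_left: "(\<Sum>z\<in>S. cscale (f z) G) = cscale (\<Sum>z\<in>S. f z) G"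
  by (rule ext) (simp add: sum_fun_apply' sum_distrib_right)

lemma cscale_zero_right: "cscale c 0 = 0"
  by (rule ext) simp

lemma sandwich_nil: "sandwich [] f [] = f"
  by (rule ext) (simp add: sandwich_def)

lemma emb_diff: "emb j (F - G) = emb j F - emb j G"
  by (rule ext) (auto simp: emb_def minus_fun_apply')

lemma emb_scale: "emb j (cscale c F) = cscale c (emb j F)"
  by (rule ext) (auto simp: emb_def)

lemma emb_sum: "emb j (\<Sum>i\<in>S. F i) = (\<Sum>i\<in>S. emb j (F i))"
  by (rule ext) (auto simp: emb_def sum_fun_apply')

lemma emb_ind: "emb j (ind w) = ind (w, j)"
  by (rule ext) (auto simp: emb_def ind_def split: if_splits)

context
  fixes al be ga :: complex
begin

abbreviation "A \<equiv> actMA al be ga"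

lemma comm_ind:
  "A x (A y (ind (w, j))) - A y (A x (ind (w, j))) - (\<Sum>z\<in>set (bz x y). cscale (brk x y z) (A z (ind (w, j))))
   = emb j (sandwich [] (lie_rel x y) w)"
proof -
  have S: "(\<Sum>z\<in>set (bz x y). cscale (brk x y z) (A z (ind (w, j))))
     = (\<Sum>z\<in>set (bz x y). cscale (brk x y z) (ind (z # w, j))) + cscale (bs x y (\<lambda>z. coefA al be ga z j)) (ind (w, j + shA x + shA y))"
  proof -
    have "(\<Sum>z\<in>set (bz x y). cscale (brk x y z) (A z (ind (w, j))))
       = (\<Sum>z\<in>set (bz x y). cscale (brk x y z) (ind (z # w, j)) + cscale (brk x y z * coefA al be ga z j) (ind (w, j + shA z)))"
      by (rule sum.cong) (simp_all add: actMA_ind cscale_add, simp add: cscale_def mult.assoc)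
    also have "\<dots> = (\<Sum>z\<in>set (bz x y). cscale (brk x y z) (ind (z # w, j))) + (\<Sum>z\<in>set (bz x y). cscale (brk x y z * coefA al be ga z j) (ind (w, j + shA z)))"
      by (rule sum.distrib)
    also have "(\<Sum>z\<in>set (bz x y). cscale (brk x y z * coefA al be ga z j) (ind (w, j + shA z)))
       = (\<Sum>z\<in>set (bz x y). cscale (brk x y z * coefA al be ga z j) (ind (w, j + shA x + shA y)))"
    proof (rule sum.cong[OF refl])
      fix z assume "z \<in> set (bz x y)"
      show "cscale (brk x y z * coefA al be ga z j) (ind (w, j + shA z)) = cscale (brk x y z * coefA al be ga z j) (ind (w, j + shA x + shA y))"
      proof (cases "brk x y z = 0")
        case True then show ?thesis by (simp add: cscale_def)
      next
        case False then show ?thesis by (simp add: sh_brk add.assoc)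
      qed
    qed
    also have "\<dots> = cscale (bs x y (\<lambda>z. coefA al be ga z j)) (ind (w, j + shA x + shA y))"
      by (simp add: cscale_sum_left bs_def)
    finally show ?thesis .
  qed
  have Ar: "bs x y (\<lambda>z. coefA al be ga z j) = coefA al be ga y j * coefA al be ga x (j + shA y) - coefA al be ga x j * coefA al be ga y (j + shA x)"
    by (rule Arel[symmetric])
  have R: "emb j (sandwich [] (lie_rel x y) w) = ind (x # y # w, j) - ind (y # x # w, j) - (\<Sum>z\<in>set (bz x y). cscale (brk x y z) (ind (z # w, j)))"
    by (simp add: sandwich_lie emb_diff emb_sum emb_scale emb_ind)
  show ?thesis
    unfolding S R Ar
    by (rule ext) (auto simp: actMA_ind actMA_add actMA_scale minus_fun_apply' ind_apply algebra_simps ac_simps)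
qed


lemma comm_KA:
  assumes f: "f \<in> finsupp"
  shows "A x (A y f) - A y (A x f) - (\<Sum>z\<in>set (bz x y). cscale (brk x y z) (A z f)) \<in> KA c h l"
proof -
  define ex where "ex = (\<lambda>f. A x (A y f) - A y (A x f) - (\<Sum>z\<in>set (bz x y). cscale (brk x y z) (A z f)))"
  have ex_add: "ex (F + G) = ex F + ex G" for F G
    unfolding ex_def by (simp add: actMA_add cscale_add sum.distrib algebra_simps)
  have ex_scale: "ex (cscale c' F) = cscale c' (ex F)" for c' F
    unfolding ex_def by (rule ext) (simp add: actMA_scale sum_fun_apply' minus_fun_apply' algebra_simps sum_distrib_left)
  have ex_zero: "ex 0 = 0"
    unfolding ex_def by (simp add: actMA_zero cscale_zero_right)
  have sub: "csubspace {f. ex f \<in> KA c h l}"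
    by (rule module.subspaceI[OF cmod])
       (auto simp: ex_add ex_scale ex_zero intro: module.subspace_add[OF cmod csub_KA] module.subspace_scale[OF cmod csub_KA] module.subspace_0[OF cmod csub_KA])
  have "f \<in> {f. ex f \<in> KA c h l}"
  proof (rule fs_induct[OF f sub])
    fix p :: "Dgen list \<times> int"
    obtain w j where p: "p = (w, j)" by (cases p)
    have "sandwich [] (lie_rel x y) w \<in> verma_kgen c h l" unfolding verma_kgen_def by blast
    note m = KA_gen[OF this, of j]
    have "ex (ind p) = emb j (sandwich [] (lie_rel x y) w)" unfolding ex_def p by (rule comm_ind)
    then show "ind p \<in> {f. ex f \<in> KA c h l}" using m by simp
  qed
  then show ?thesis by (simp add: ex_def)
qed

lemma CW:
  assumes f: "f \<in> finsupp"
  shows "A y (actw A xs f) - actw A xs (A y f)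
     - (\<Sum>i<length xs. \<Sum>z\<in>set (bz y (xs ! i)). cscale (brk y (xs ! i) z) (actw A (xs[i := z]) f)) \<in> KA c h l"
proof (induction xs)
  case Nil
  show ?case
    by (simp only: actw.simps list.size(3) lessThan_0 sum.empty diff_self diff_zero)
       (rule module.subspace_0[OF cmod csub_KA])
next
  case (Cons t xs)
  define g where "g = actw A xs f"
  have g: "g \<in> finsupp" unfolding g_def by (rule actw_finsupp[OF f])
  define SS where "SS = (\<Sum>i<length xs. \<Sum>z\<in>set (bz y (xs ! i)). cscale (brk y (xs ! i) z) (actw A (xs[i := z]) f))"
  define S0 where "S0 = (\<Sum>z\<in>set (bz y t). cscale (brk y t z) (A z g))"
  have k1: "A y (A t g) - A t (A y g) - S0 \<in> KA c h l" unfolding S0_def by (rule comm_KA[OF g])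
  have k2: "A t (A y g - actw A xs (A y f) - SS) \<in> KA c h l"
    by (rule actMA_KA) (unfold g_def SS_def, rule Cons.IH)
  have ASS: "A t SS = (\<Sum>i<length xs. \<Sum>z\<in>set (bz y (xs ! i)). cscale (brk y (xs ! i) z) (actw A ((t # xs)[Suc i := z]) f))"
    unfolding SS_def by (simp add: actMA_sum actMA_scale)
  have SUM: "(\<Sum>i<length (t # xs). \<Sum>z\<in>set (bz y ((t # xs) ! i)). cscale (brk y ((t # xs) ! i) z) (actw A ((t # xs)[i := z]) f))
     = S0 + A t SS"
    unfolding ASS S0_def g_def by (simp only: length_Cons sum.lessThan_Suc_shift) simp
  have eq: "A y (actw A (t # xs) f) - actw A (t # xs) (A y f)
     - (\<Sum>i<length (t # xs). \<Sum>z\<in>set (bz y ((t # xs) ! i)). cscale (brk y ((t # xs) ! i) z) (actw A ((t # xs)[i := z]) f))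
     = (A y (A t g) - A t (A y g) - S0) + A t (A y g - actw A xs (A y f) - SS)"
    unfolding SUM by (simp add: g_def actMA_diff)
  show ?case unfolding eq by (rule module.subspace_add[OF cmod csub_KA k1 k2])
qed

end

context
  fixes cc hh ll al be ga :: complex and jt :: int
begin

abbreviation "LLL \<equiv> LL cc hh ll al be ga jt"
abbreviation "AA \<equiv> actMA al be ga"

lemma LL_ind: "LLL (ind (w, j)) = lam cc hh ll al be ga jt j w"
  by (simp add: LL_def lin_ind)

lemma LL_add: "f \<in> finsupp \<Longrightarrow> g \<in> finsupp \<Longrightarrow> LLL (f + g) = LLL f + LLL g"
  by (simp add: LL_def lin_add)

lemma LL_scale: "LLL (cscale c f) = c * LLL f"
  by (simp add: LL_def lin_scale)

lemma LL_N:
  assumes y: "\<not> in_borel y" and f: "f \<in> finsupp"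
  shows "LLL (AA y f) = 0"
proof -
  have "f \<in> {f. AA y f \<in> {g. g \<in> finsupp \<and> lin (\<lambda>p. lam cc hh ll al be ga jt (snd p) (fst p)) g = 0}}"
  proof (rule fs_induct[OF f csub_pre[OF csub_lin]])
    fix p :: "Dgen list \<times> int"
    obtain w j where p: "p = (w, j)" by (cases p)
    have "LLL (AA y (ind p)) = lam cc hh ll al be ga jt j (y # w) + coefA al be ga y j * lam cc hh ll al be ga jt (j + shA y) w"
      unfolding p actMA_ind by (simp add: LL_add LL_scale LL_ind finsupp_ind finsupp_scale)
    also have "\<dots> = 0" by (simp add: lam_Ncons[OF y])
    finally show "ind p \<in> {f. AA y f \<in> {g. g \<in> finsupp \<and> lin (\<lambda>p. lam cc hh ll al be ga jt (snd p) (fst p)) g = 0}}"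
      by (simp add: LL_def p actMA_finsupp finsupp_ind)
  qed
  then show ?thesis by (simp add: LL_def)
qed

lemma LL_one: "LLL (one_v b) = (if b = jt then 1 else 0)"
  by (simp add: one_v_def LL_ind lam_N)

lemma LL_sum: "(\<And>i. i \<in> S \<Longrightarrow> F i \<in> finsupp) \<Longrightarrow> LLL (sum F S) = (\<Sum>i\<in>S. LLL (F i))"
  by (simp add: LL_def lin_sum)

lemma main_E: "jt < b \<Longrightarrow> LLL (actw AA xs (one_v b)) = 0"
proof (induction "length xs" arbitrary: xs b rule: less_induct)
  case less
  show ?case
  proof (cases xs)
    case Nil
    then show ?thesis using less.prems by (simp add: LL_one)
  next
    case (Cons y xs')
    have u: "one_v b \<in> finsupp" by (simp add: one_v_def finsupp_ind)
    have gf: "actw AA xs' (one_v b) \<in> finsupp" by (rule actw_finsupp[OF u])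
    show ?thesis
    proof (cases "in_borel y")
      case False
      then show ?thesis using LL_N[OF False gf] by (simp add: Cons)
    next
      case yB: True
      define SS where "SS = (\<Sum>i<length xs'. \<Sum>z\<in>set (bz y (xs' ! i)). cscale (brk y (xs' ! i) z) (actw AA (xs'[i := z]) (one_v b)))"
      define k where "k = AA y (actw AA xs' (one_v b)) - actw AA xs' (AA y (one_v b)) - SS"
      have kK: "k \<in> KA cc hh ll" unfolding k_def SS_def by (rule CW[OF u])
      have SSf: "SS \<in> finsupp" unfolding SS_def
        by (intro finsupp_sum finsupp_scale actw_finsupp u)
      have kf: "k \<in> finsupp" using kK KA_finsupp by auto
      have Ayu: "AA y (one_v b) = emb b (ind [y] - cscale (borel_chi cc hh ll y) (ind []))
          + cscale (borel_chi cc hh ll y) (one_v b) + cscale (coefA al be ga y b) (one_v (b + shA y))"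
        unfolding one_v_def actMA_ind emb_diff emb_scale emb_ind by (simp add: algebra_simps)
      have genK: "emb b (ind [y] - cscale (borel_chi cc hh ll y) (ind [])) \<in> KA cc hh ll"
      proof (rule KA_gen)
        have "sandwich [] (ind [y] - cscale (borel_chi cc hh ll y) (ind [])) [] \<in> verma_kgen cc hh ll"
          using yB unfolding verma_kgen_def by blast
        then show "ind [y] - cscale (borel_chi cc hh ll y) (ind []) \<in> verma_kgen cc hh ll"
          by (simp only: sandwich_nil)
      qed
      have e1: "LLL (actw AA xs' (emb b (ind [y] - cscale (borel_chi cc hh ll y) (ind [])))) = 0"
        using LL_KA[OF actw_KA[OF genK, of al be ga xs']] by simp
      have lxs: "length xs' < length xs" by (simp add: Cons)
      have e2: "LLL (actw AA xs' (one_v b)) = 0" by (rule less.hyps[OF lxs less.prems])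
      have e3: "LLL (actw AA xs' (one_v (b + shA y))) = 0"
        by (rule less.hyps[OF lxs]) (use less.prems shB[OF yB] in simp)
      have fK: "actw AA xs' (emb b (ind [y] - cscale (borel_chi cc hh ll y) (ind []))) \<in> finsupp"
        using actw_KA[OF genK, of al be ga xs'] KA_finsupp by blast
      have f2: "actw AA xs' (one_v (b + shA y)) \<in> finsupp" by (simp add: actw_finsupp one_v_def finsupp_ind)
      have T: "LLL (actw AA xs' (AA y (one_v b))) = 0"
        unfolding Ayu actw_add actw_scale
        by (simp add: LL_add LL_scale e1 e2 e3 fK gf f2 finsupp_add finsupp_scale)
      have S: "LLL SS = 0"
      proof -
        have "LLL SS = (\<Sum>i<length xs'. \<Sum>z\<in>set (bz y (xs' ! i)). brk y (xs' ! i) z * LLL (actw AA (xs'[i := z]) (one_v b)))"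
          unfolding SS_def
          by (simp add: LL_sum LL_scale finsupp_sum finsupp_scale actw_finsupp u)
        also have "\<dots> = 0"
          by (intro sum.neutral ballI) (simp add: less.hyps less.prems Cons)
        finally show ?thesis .
      qed
      have eq: "AA y (actw AA xs' (one_v b)) = k + (actw AA xs' (AA y (one_v b)) + SS)"
        by (simp add: k_def)
      have f3: "actw AA xs' (AA y (one_v b)) \<in> finsupp" by (intro actw_finsupp actMA_finsupp u)
      have "LLL (AA y (actw AA xs' (one_v b))) = LLL k + (LLL (actw AA xs' (AA y (one_v b))) + LLL SS)"
        unfolding eq by (simp add: LL_add kf f3 SSf finsupp_add)
      then show ?thesis using LL_KA[OF kK] T S by (simp add: Cons)
    qed
  qed
qed

end


theorem lemma3p4:
  fixes c h l \<alpha> \<beta> \<gamma> :: complex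
  assumes "l \<noteq> 0" and "\<gamma> \<noteq> 0"
  shows "(\<forall>j::int. one_v j \<notin> cyc (KA c h l) (actMA \<alpha> \<beta> \<gamma>) (one_v (j + 1)))
       \<and> \<not> quot_irreducible (KA c h l) (actMA \<alpha> \<beta> \<gamma>)"
proof -
  have a: "one_v j \<notin> cyc (KA c h l) (actMA \<alpha> \<beta> \<gamma>) (one_v (j + 1))" for j
  proof
    assume m: "one_v j \<in> cyc (KA c h l) (actMA \<alpha> \<beta> \<gamma>) (one_v (j + 1))"
    let ?T = "{f. f \<in> finsupp \<and> lin (\<lambda>p. lam c h l \<alpha> \<beta> \<gamma> j (snd p) (fst p)) f = 0}"
    have gens: "KA c h l \<union> {actw (actMA \<alpha> \<beta> \<gamma>) xs (one_v (j + 1)) | xs. True} \<subseteq> ?T"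
    proof
      fix f assume "f \<in> KA c h l \<union> {actw (actMA \<alpha> \<beta> \<gamma>) xs (one_v (j + 1)) | xs. True}"
      then show "f \<in> ?T"
      proof
        assume fK: "f \<in> KA c h l"
        have "f \<in> finsupp \<and> LL c h l \<alpha> \<beta> \<gamma> j f = 0" by (rule LL_KA[OF fK])
        then show ?thesis by (simp add: LL_def)
      next
        assume "f \<in> {actw (actMA \<alpha> \<beta> \<gamma>) xs (one_v (j + 1)) | xs. True}"
        then obtain xs where f: "f = actw (actMA \<alpha> \<beta> \<gamma>) xs (one_v (j + 1))" by auto
        have "LL c h l \<alpha> \<beta> \<gamma> j (actw (actMA \<alpha> \<beta> \<gamma>) xs (one_v (j + 1))) = 0" by (rule main_E) simp
        moreover have "f \<in> finsupp" unfolding f by (rule actw_finsupp) (simp add: one_v_def finsupp_ind)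
        ultimately show ?thesis by (simp add: LL_def f)
      qed
    qed
    have "cyc (KA c h l) (actMA \<alpha> \<beta> \<gamma>) (one_v (j + 1)) \<subseteq> ?T"
      unfolding cyc_def by (rule module.span_minimal[OF cmod gens csub_lin])
    with m have "LL c h l \<alpha> \<beta> \<gamma> j (one_v j) = 0" by (auto simp: LL_def)
    then show False by (simp add: LL_one)
  qed
  have b: "\<not> quot_irreducible (KA c h l) (actMA \<alpha> \<beta> \<gamma>)"
  proof
    assume qi: "quot_irreducible (KA c h l) (actMA \<alpha> \<beta> \<gamma>)"
    define S where "S = cyc (KA c h l) (actMA \<alpha> \<beta> \<gamma>) (one_v 1)"
    define G where "G = KA c h l \<union> {actw (actMA \<alpha> \<beta> \<gamma>) xs (one_v 1) | xs. True}"
    have SG: "S = cspan G" unfolding S_def G_def cyc_def ..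
    have Ssub: "csubspace S" unfolding SG by (rule module.subspace_span[OF cmod])
    have GS: "G \<subseteq> S" unfolding SG by (rule module.span_superset[OF cmod])
    have KS: "KA c h l \<subseteq> S" using GS unfolding G_def by auto
    have SF: "S \<subseteq> finsupp" unfolding SG
    proof (rule module.span_minimal[OF cmod _ csub_finsupp])
      show "G \<subseteq> finsupp"
        unfolding G_def using KA_finsupp by (auto intro!: actw_finsupp simp: one_v_def finsupp_ind)
    qed
    have Sst: "\<forall>x. \<forall>f\<in>S. actMA \<alpha> \<beta> \<gamma> x f \<in> S"
    proof (intro allI ballI)
      fix x f assume fS: "f \<in> S"
      have "S \<subseteq> {f. actMA \<alpha> \<beta> \<gamma> x f \<in> S}" unfolding SG
      proof (rule module.span_minimal[OF cmod _ csub_pre[OF module.subspace_span[OF cmod]]])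
        show "G \<subseteq> {f. actMA \<alpha> \<beta> \<gamma> x f \<in> cspan G}"
        proof
          fix g assume gG: "g \<in> G"
          have "actMA \<alpha> \<beta> \<gamma> x g \<in> cspan G"
          proof (cases "g \<in> KA c h l")
            case True
            then have "actMA \<alpha> \<beta> \<gamma> x g \<in> KA c h l" by (rule actMA_KA)
            then show ?thesis using GS unfolding SG G_def by auto
          next
            case False
            with gG obtain xs where g: "g = actw (actMA \<alpha> \<beta> \<gamma>) xs (one_v 1)" unfolding G_def by auto
            have "actMA \<alpha> \<beta> \<gamma> x g = actw (actMA \<alpha> \<beta> \<gamma>) (x # xs) (one_v 1)" by (simp add: g)
            then have "actMA \<alpha> \<beta> \<gamma> x g \<in> G" unfolding G_def by blast
            then show ?thesis using GS unfolding SG by auto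
          qed
          then show "g \<in> {f. actMA \<alpha> \<beta> \<gamma> x f \<in> cspan G}" by simp
        qed
      qed
      then show "actMA \<alpha> \<beta> \<gamma> x f \<in> S" using fS by auto
    qed
    from qi Ssub KS SF Sst have alt: "S = KA c h l \<or> S = finsupp"
      unfolding quot_irreducible_def by blast
    have o1: "one_v 1 \<in> S"
    proof -
      have "actw (actMA \<alpha> \<beta> \<gamma>) [] (one_v 1) \<in> G" unfolding G_def by blast
      then show ?thesis using GS by auto
    qed
    show False
    proof (cases "S = KA c h l")
      case True
      with o1 have "one_v 1 \<in> KA c h l" by simp
      then have "one_v 1 \<in> cyc (KA c h l) (actMA \<alpha> \<beta> \<gamma>) (one_v (1 + 1))"
        unfolding cyc_def by (rule module.span_base[OF cmod, OF UnI1])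
      with a[of 1] show False by simp
    next
      case False
      with alt have "S = finsupp" by simp
      moreover have "one_v 0 \<in> finsupp" by (simp add: one_v_def finsupp_ind)
      ultimately have "one_v 0 \<in> cyc (KA c h l) (actMA \<alpha> \<beta> \<gamma>) (one_v (0 + 1))" by (simp add: S_def)
      with a[of 0] show False by simp
    qed
  qed
  from a b show ?thesis by blast
qed


end
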